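(* Let $b_0=1$ and let $b_1,\dots,b_d$ be nonzero reals with $b_d>0$; put $a_k=b_k/|b_{k-1}|$. Then $$g_d(b_1,\dots,b_d)=f_d\Big(b_1,\frac{b_2}{b_1},\dots,\frac{b_d}{b_{d-1}}\Big)=\operatorname{sign}\Big(\prod_{i=1}^d b_i\Big)\sum_{s_1=1}^{\overline{a_1}}\ \sum_{s_2=1}^{\overline{a_2s_1}}\cdots\sum_{s_d=1}^{\overline{a_ds_{d-1}}}1,$$ where the sums are in the extended sense and $\overline{a_{i+1}s_i}$ means $a_{i+1}s_i$ if $a_{i+1}>0$ and $-a_{i+1}s_i-1$ if $a_{i+1}<0$ (similarly $\overline{a_1}=a_1$ or $-a_1-1$ according to the sign of $a_1$).
   Context: Let $B_k(x)$ be the Bernoulli polynomials ($te^{tx}/(e^t-1)=\sum_k B_k(x)t^k/k!$), $B_k=B_k(0)$, and $P_k(x)=(B_{k+1}(x+1)-B_{k+1})/(k+1)$. Extended sum: for a polynomial $h(s)=\sum_{k\ge0}h_ks^k$ (coefficients in a polynomial ring over $\mathbb R$) and upper limit $u$, $\sum_{s=1}^{u}h:=h_0u+\sum_{k\ge1}h_kP_k(u)$; this agrees with the usual sum for positive integers $u$. $f_d(a_1,\dots,a_d)=\sum_{s_1=1}^{a_1}\sum_{s_2=1}^{a_2s_1}\cdots\sum_{s_d=1}^{a_ds_{d-1}}1$, evaluated from the innermost sum outward with extended sums (a polynomial in $a_1,\dots,a_d$). With $b_0=1$, $g_d(b_1,\dots,b_d)=f_d(b_1/b_0,b_2/b_1,\dots,b_d/b_{d-1})$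 for nonzero reals $b_i$. *)

theory Defs
  imports "HOL-Computational_Algebra.Computational_Algebra"
begin

definition bern_gf :: "real fps" where
  "bern_gf = fps_X div (fps_exp 1 - 1)"

text \<open>Bernoulli polynomial B_k(x): k! times the coefficient of t^k in
  (t/(e^t-1)) * e^{tx} = (sum_j b_j t^j) * (sum_m x^m t^m / m!), where b_j = bern_gf $ j.\<close>
definition bernpoly :: "nat \<Rightarrow> real poly" where
  "bernpoly k = smult (fact k) (\<Sum>m\<le>k. monom (bern_gf $ (k - m) / fact m) m)"

definition bernoulli_num :: "nat \<Rightarrow> real" where
  "bernoulli_num k = poly (bernpoly k) 0"

definition Ppoly :: "nat \<Rightarrow> real poly" where
  "Ppoly k = smult (1 / real (k + 1))
     (pcompose (bernpoly (k + 1)) [:1, 1:] - [:bernoulli_num (k + 1):])"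

text \<open>Extended sum sum_{s=1}^{u} h = h_0 u + sum_{k>=1} h_k P_k(u); the upper limit u
  is itself a polynomial in the next outer summation variable, so the result is one too.\<close>
definition ext_sum :: "real poly \<Rightarrow> real poly \<Rightarrow> real poly" where
  "ext_sum h u = smult (coeff h 0) u + (\<Sum>k\<in>{1..degree h}. smult (coeff h k) (pcompose (Ppoly k) u))"

text \<open>Nested extended sums with upper limits c_1 s_0, c_2 s_1, ..., c_d s_{d-1},
  evaluated innermost outward; result is a polynomial in s_0.\<close>
fun nested :: "real list \<Rightarrow> real poly" where
  "nested [] = 1"
| "nested (c # cs) = ext_sum (nested cs) [:0, c:]"

text \<open>f_d(a_1,...,a_d), with s_0 = 1 (so the outermost limit is a_1).\<close>
definition f_d :: "real list \<Rightarrow> real" where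
  "f_d as = poly (nested as) 1"

definition g_d :: "nat \<Rightarrow> (nat \<Rightarrow> real) \<Rightarrow> real" where
  "g_d d b = f_d (map (\<lambda>i. b i / b (i - 1)) [1..<Suc d])"

definition bar_limit :: "real \<Rightarrow> real poly" where
  "bar_limit c = (if c > 0 then [:0, c:] else [:-1, -c:])"

fun nested_bar :: "real list \<Rightarrow> real poly" where
  "nested_bar [] = 1"
| "nested_bar (c # cs) = ext_sum (nested_bar cs) (bar_limit c)"

definition f_bar :: "real list \<Rightarrow> real" where
  "f_bar as = poly (nested_bar as) 1"

end

theory Submission
  imports Defs
begin

definition R :: "real fps \<Rightarrow> real fps" where
  "R f = Abs_fps (\<lambda>n. (-1)^n * f $ n)"

lemma R_nth[simp]: "R f $ n = (-1)^n * f $ n" by (simp add: R_def)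

lemma R_mult: "R (f * g) = R f * R g"
proof (rule fps_ext)
  fix n
  have "R (f*g) $ n = (\<Sum>i=0..n. ((-1)^i * f$i) * ((-1)^(n-i) * g$(n-i)))"
    unfolding R_nth fps_mult_nth sum_distrib_left
  proof (rule sum.cong)
    fix i assume "i \<in> {0..n}"
    then have "(-1::real)^n = (-1)^i * (-1)^(n-i)" by (simp flip: power_add)
    then show "(-1)^n * (f $ i * g $ (n - i)) = (-1)^i * f$i * ((-1)^(n-i) * g$(n-i))" by simp
  qed simp
  then show "R (f*g) $ n = (R f * R g) $ n" by (simp add: fps_mult_nth)
qed

lemma R_add: "R (f + g) = R f + R g" by (rule fps_ext) (simp add: algebra_simps)
lemma R_diff: "R (f - g) = R f - R g" by (rule fps_ext) (simp add: algebra_simps)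
lemma R_one: "R 1 = 1" by (rule fps_ext) simp
lemma R_X: "R fps_X = - fps_X" by (rule fps_ext) (simp add: fps_X_def)
lemma R_exp: "R (fps_exp c) = fps_exp (- c)"
  by (rule fps_ext) (simp add: power_mult_distrib[symmetric])

lemma bern_mult: "bern_gf * (fps_exp 1 - 1) = fps_X"
proof -
  have ne: "fps_exp (1::real) - 1 \<noteq> 0"
  proof
    assume "fps_exp (1::real) - 1 = 0"
    then have "(fps_exp (1::real) - 1) $ 1 = 0" by simp
    then show False by simp
  qed
  have "subdegree (fps_exp (1::real) - 1) \<le> 1"
    by (rule subdegree_leI) simp
  then have "subdegree (fps_X::real fps) \<ge> subdegree (fps_exp (1::real) - 1)" by simp
  then show ?thesis unfolding bern_gf_def using fps_times_divide_eq[OF ne] by blast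
qed

lemma R_bern: "R bern_gf = fps_X + bern_gf"
proof -
  let ?E = "fps_exp (1::real)"
  have "R bern_gf * (fps_exp (-1) - 1) = - fps_X"
    using arg_cong[OF bern_mult, of R] by (simp add: R_mult R_diff R_one R_X R_exp)
  then have 1: "R bern_gf * (fps_exp (-1) - 1) * ?E = - fps_X * ?E" by simp
  have 2: "fps_exp (-1) * ?E = 1" by (simp flip: fps_exp_add_mult)
  have "R bern_gf * (fps_exp (-1) - 1) * ?E = R bern_gf * (fps_exp (-1) * ?E) - R bern_gf * ?E"
    by (simp add: algebra_simps)
  also have "\<dots> = R bern_gf * (1 - ?E)" by (simp only: 2) (simp add: algebra_simps)
  finally have "R bern_gf * (1 - ?E) = - fps_X * ?E" using 1 by simp
  then have a: "R bern_gf * (?E - 1) = fps_X * ?E" by (simp add: algebra_simps)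
  have b: "(fps_X + bern_gf) * (?E - 1) = fps_X * ?E" using bern_mult by (simp add: algebra_simps)
  have ne: "?E - 1 \<noteq> 0"
  proof
    assume "?E - 1 = 0"
    then have "(?E - 1) $ 1 = 0" by simp
    then show False by simp
  qed
  from a b have "(R bern_gf - (fps_X + bern_gf)) * (?E - 1) = 0" by (simp add: algebra_simps)
  with ne show ?thesis by simp
qed

lemma bern_odd: "odd n \<Longrightarrow> n \<noteq> 1 \<Longrightarrow> bern_gf $ n = 0"
  using arg_cong[OF R_bern, of "\<lambda>f. f $ n"] by (simp add: fps_X_def)

lemma poly_bernpoly: "poly (bernpoly k) x = fact k * (fps_exp x * bern_gf) $ k"
  unfolding bernpoly_def fps_mult_nth fps_exp_nth
  by (simp add: poly_sum poly_monom atMost_atLeast0 sum_distrib_left mult_ac)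

lemma bernpoly_refl: "poly (bernpoly n) (- x) = (-1)^n * poly (bernpoly n) (x + 1)"
proof -
  have "R (fps_exp (x+1) * bern_gf) = fps_exp (-x-1) * (fps_X + bern_gf)"
    by (simp add: R_mult R_exp R_bern)
  also have "fps_X + bern_gf = bern_gf * fps_exp 1"
    using bern_mult by (simp add: algebra_simps)
  also have "fps_exp (-x-1) * (bern_gf * fps_exp 1) = fps_exp (-x) * bern_gf"
    by (simp add: mult_ac flip: fps_exp_add_mult)
  finally have "R (fps_exp (x+1) * bern_gf) $ n = (fps_exp (-x) * bern_gf) $ n" by simp
  then show ?thesis by (simp add: poly_bernpoly)
qed

lemma bernpoly_0: "poly (bernpoly n) 0 = fact n * bern_gf $ n"
  by (simp add: poly_bernpoly fps_mult_nth)

lemma Ppoly_refl: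
  assumes "k \<ge> 1"
  shows "poly (Ppoly k) (- y - 1) = (-1)^(k+1) * poly (Ppoly k) y"
proof -
  have z: "(-1)^(k+1) * bernoulli_num (k+1) = bernoulli_num (k+1)"
  proof (cases "even (k+1)")
    case False
    then show ?thesis using assms by (simp add: bernoulli_num_def bernpoly_0 bern_odd)
  qed simp
  have "poly (Ppoly k) (- y - 1) = (poly (bernpoly (k+1)) (-y) - bernoulli_num (k+1)) / (k+1)"
    by (simp add: Ppoly_def poly_pcompose)
  also have "\<dots> = (-1)^(k+1) * (poly (bernpoly (k+1)) (y+1) - bernoulli_num (k+1)) / (k+1)"
    using z by (simp only: bernpoly_refl[of "k+1" y]) (simp add: algebra_simps)
  also have "\<dots> = (-1)^(k+1) * poly (Ppoly k) y"
    by (simp add: Ppoly_def poly_pcompose field_simps)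
  finally show ?thesis .
qed

lemma Ppoly_0:
  assumes "k \<ge> 1"
  shows "poly (Ppoly k) 0 = 0"
proof -
  have r: "bernoulli_num (k+1) = (-1)^(k+1) * poly (bernpoly (k+1)) 1"
    using bernpoly_refl[of "k+1" 0] by (simp add: bernoulli_num_def)
  have "poly (bernpoly (k+1)) 1 = bernoulli_num (k+1)"
  proof (cases "even (k+1)")
    case True then show ?thesis using r by simp
  next
    case False
    then have "bernoulli_num (k+1) = 0" using assms by (simp add: bernoulli_num_def bernpoly_0 bern_odd)
    then show ?thesis using r by simp
  qed
  then show ?thesis by (simp add: Ppoly_def poly_pcompose)
qed


definition Ev :: "nat \<Rightarrow> (nat \<Rightarrow> real) \<Rightarrow> real \<Rightarrow> real" where
  "Ev n a y = a 0 * y + (\<Sum>k=1..n. a k * poly (Ppoly k) y)"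

lemma ev_ext: "degree h \<le> n \<Longrightarrow> poly (ext_sum h u) x = Ev n (coeff h) (poly u x)"
proof -
  assume h: "degree h \<le> n"
  have "(\<Sum>k=1..degree h. coeff h k * poly (Ppoly k) (poly u x)) = (\<Sum>k=1..n. coeff h k * poly (Ppoly k) (poly u x))"
    by (rule sum.mono_neutral_left) (use h in \<open>auto simp: coeff_eq_0\<close>)
  then show ?thesis by (simp add: ext_sum_def Ev_def poly_sum poly_pcompose)
qed

lemma ev_refl: "Ev n a (- y - 1) = - a 0 - Ev n (\<lambda>k. (-1)^k * a k) y"
proof -
  have "(\<Sum>k=1..n. a k * poly (Ppoly k) (- y - 1)) = - (\<Sum>k=1..n. (-1)^k * a k * poly (Ppoly k) y)"
    unfolding sum_negf[symmetric] by (rule sum.cong) (auto simp: Ppoly_refl mult_ac)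
  then show ?thesis by (simp add: Ev_def algebra_simps)
qed

lemma ev_scale: "Ev n (\<lambda>k. c * a k) y = c * Ev n a y"
  by (simp add: Ev_def sum_distrib_left algebra_simps)

lemma ev_zero: "Ev n a 0 = 0"
  by (simp add: Ev_def Ppoly_0)

fun rat :: "real \<Rightarrow> real list \<Rightarrow> real list" where
  "rat p [] = []"
| "rat p (x # xs) = x / p # rat x xs"

fun ratb :: "real \<Rightarrow> real list \<Rightarrow> real list" where
  "ratb p [] = []"
| "ratb p (x # xs) = x / \<bar>p\<bar> # ratb x xs"

lemma nested_bar_zero:
  "p \<noteq> 0 \<Longrightarrow> xs \<noteq> [] \<Longrightarrow> last xs > 0 \<Longrightarrow> \<forall>x\<in>set xs. x \<noteq> 0 \<Longrightarrow>
   poly (nested_bar (ratb p xs)) 0 = 0"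
proof (induction xs arbitrary: p)
  case Nil then show ?case by simp
next
  case (Cons y ys)
  let ?H = "nested_bar (ratb y ys)"
  have e: "poly (nested_bar (ratb p (y # ys))) 0 = Ev (degree ?H) (coeff ?H) (poly (bar_limit (y / \<bar>p\<bar>)) 0)"
    by (simp add: ev_ext)
  show ?case
  proof (cases "y > 0")
    case True
    then have "y / \<bar>p\<bar> > 0" using Cons.prems by simp
    then show ?thesis using e by (simp add: bar_limit_def ev_zero)
  next
    case False
    then have y: "y < 0" using Cons.prems by force
    then have "y / \<bar>p\<bar> < 0" using Cons.prems by (intro divide_neg_pos) auto
    then have "\<not> y / \<bar>p\<bar> > 0" by simp
    then have "poly (bar_limit (y / \<bar>p\<bar>)) 0 = - 0 - 1" by (simp add: bar_limit_def)
    then have e2: "poly (nested_bar (ratb p (y # ys))) 0 = - poly ?H 0"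
      using e by (simp only: ev_refl ev_zero) (simp add: poly_0_coeff_0)
    have "ys \<noteq> []" using y Cons.prems by auto
    then have "poly ?H 0 = 0" using Cons.IH[of y] Cons.prems by auto
    then show ?thesis using e2 by simp
  qed
qed

lemma main_lemma:
  "p \<noteq> 0 \<Longrightarrow> (xs \<noteq> [] \<longrightarrow> last xs > 0) \<Longrightarrow> \<forall>x\<in>set xs. x \<noteq> 0 \<Longrightarrow>
   poly (nested (rat p xs)) x = sgn (prod_list xs) * poly (nested_bar (ratb p xs)) (sgn p * x)"
proof (induction xs arbitrary: p x)
  case Nil then show ?case by simp
next
  case (Cons y ys)
  let ?H = "nested_bar (ratb y ys)"
  let ?N = "nested (rat y ys)"
  let ?s = "sgn (prod_list ys)"
  have y0: "y \<noteq> 0" and p0: "p \<noteq> 0" using Cons.prems by auto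
  have "\<And>x. poly ?N x = ?s * poly ?H (sgn y * x)"
    using Cons.IH[of y] Cons.prems by (cases "ys = []") auto
  then have "poly ?N = poly (smult ?s (pcompose ?H [:0, sgn y:]))"
    by (auto simp: poly_pcompose mult.commute)
  then have N: "?N = smult ?s (pcompose ?H [:0, sgn y:])" by (simp add: poly_eq_poly_eq_iff)
  have cN: "coeff ?N = (\<lambda>k. ?s * (sgn y ^ k * coeff ?H k))"
    by (rule ext) (simp add: N coeff_pcompose_linear)
  have "degree ?N \<le> degree ?H"
  proof -
    have "degree (pcompose ?H [:0, sgn y:]) \<le> degree ?H * degree [:0, sgn y:]" by (rule degree_pcompose_le)
    also have "\<dots> \<le> degree ?H" by simp
    finally show ?thesis unfolding N using degree_smult_le order_trans by blast
  qed
  then have L: "poly (nested (rat p (y # ys))) x = Ev (degree ?H) (coeff ?N) (y / p * x)"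
    by (simp add: ev_ext mult.commute)
  have R: "poly (nested_bar (ratb p (y # ys))) (sgn p * x) = Ev (degree ?H) (coeff ?H) (poly (bar_limit (y / \<bar>p\<bar>)) (sgn p * x))"
    by (simp add: ev_ext)
  have key: "y / \<bar>p\<bar> * (sgn p * x) = y / p * x"
    using p0 by (cases "p > 0") (auto simp: sgn_if)
  show ?case
  proof (cases "y > 0")
    case True
    then have "y / \<bar>p\<bar> > 0" using p0 by simp
    then have "poly (bar_limit (y / \<bar>p\<bar>)) (sgn p * x) = y / p * x"
      using key by (simp add: bar_limit_def mult_ac)
    then show ?thesis using L R True by (simp add: cN ev_scale sgn_mult)
  next
    case False
    then have y: "y < 0" using y0 by force
    then have "y / \<bar>p\<bar> < 0" using p0 by (intro divide_neg_pos) auto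
    then have "\<not> y / \<bar>p\<bar> > 0" by simp
    then have "poly (bar_limit (y / \<bar>p\<bar>)) (sgn p * x) = - (y / p * x) - 1"
      using key by (simp add: bar_limit_def algebra_simps)
    then have R2: "poly (nested_bar (ratb p (y # ys))) (sgn p * x) = - coeff ?H 0 - Ev (degree ?H) (\<lambda>k. (-1)^k * coeff ?H k) (y / p * x)"
      using R by (simp add: ev_refl)
    have "ys \<noteq> []" using y Cons.prems by auto
    then have "poly ?H 0 = 0" using nested_bar_zero[of y ys] Cons.prems by auto
    then have "coeff ?H 0 = 0" by (simp add: poly_0_coeff_0)
    then show ?thesis using L R2 y by (simp add: cN ev_scale sgn_mult)
  qed
qed

lemma map_rat: "1 \<le> i \<Longrightarrow> map (\<lambda>j. b j / b (j - 1)) [i..<i+k] = rat (b (i - 1)) (map b [i..<i+k])"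
proof (induction k arbitrary: i)
  case 0 then show ?case by simp
next
  case (Suc k)
  have "[i..<i + Suc k] = i # [Suc i..<Suc i + k]" by (simp add: upt_conv_Cons)
  then show ?case using Suc.IH[of "Suc i"] by simp
qed

lemma map_ratb: "1 \<le> i \<Longrightarrow> map (\<lambda>j. b j / \<bar>b (j - 1)\<bar>) [i..<i+k] = ratb (b (i - 1)) (map b [i..<i+k])"
proof (induction k arbitrary: i)
  case 0 then show ?case by simp
next
  case (Suc k)
  have "[i..<i + Suc k] = i # [Suc i..<Suc i + k]" by (simp add: upt_conv_Cons)
  then show ?case using Suc.IH[of "Suc i"] by simp
qed

theorem mainTheorem12:
  fixes d :: nat and b :: "nat \<Rightarrow> real"
  assumes b0: "b 0 = 1"
    and nz: "\<forall>i\<in>{1..d}. b i \<noteq> 0"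
    and pos: "b d > 0"
  shows "g_d d b = f_d (map (\<lambda>i. b i / b (i - 1)) [1..<Suc d])
    \<and> g_d d b = sgn (\<Prod>i\<in>{1..d}. b i)
        * f_bar (map (\<lambda>i. b i / \<bar>b (i - 1)\<bar>) [1..<Suc d])"
proof -
  have m1: "map (\<lambda>i. b i / b (i - 1)) [1..<Suc d] = rat 1 (map b [1..<Suc d])"
    using map_rat[of 1 b d] b0 by simp
  have m2: "map (\<lambda>i. b i / \<bar>b (i - 1)\<bar>) [1..<Suc d] = ratb 1 (map b [1..<Suc d])"
    using map_ratb[of 1 b d] b0 by simp
  have pl: "prod_list (map b [1..<Suc d]) = (\<Prod>i\<in>{1..d}. b i)"
  proof -
    have "prod_list (map b [1..<Suc d]) = prod b (set [1..<Suc d])"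
      by (rule prod.distinct_set_conv_list[symmetric]) simp
    also have "set [1..<Suc d] = {1..d}" by auto
    finally show ?thesis .
  qed
  have ls: "map b [1..<Suc d] \<noteq> [] \<longrightarrow> last (map b [1..<Suc d]) > 0"
    using pos by (cases d) auto
  have st: "\<forall>x\<in>set (map b [1..<Suc d]). x \<noteq> 0" using nz by auto
  have "g_d d b = poly (nested (rat 1 (map b [1..<Suc d]))) 1"
    by (simp only: g_d_def f_d_def m1)
  also have "\<dots> = sgn (\<Prod>i\<in>{1..d}. b i) * poly (nested_bar (ratb 1 (map b [1..<Suc d]))) 1"
    using main_lemma[OF _ ls st, of 1 1] pl by simp
  finally show ?thesis by (simp only: g_d_def f_bar_def m2 simp_thms)
qed

end
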